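(* For $i\in\{0,1\}$ let $f_i:(0,\infty)\to\mathbb R$ be bounded on $(0,a]$ for every $a>0$. Assume there are constants $p_0,p_1\in(0,1)$ and functions $\eta_i:(0,\infty)\to\mathbb R$ such that for all $x>0$ and $i\in\{0,1\}$ $$f_i(x)=f_i(xp_i)+f_{1-i}(x(1-p_i))+\eta_i(x).$$ If, as $x\to\infty$, $\eta_i(x)=O(x^{1-\alpha})$ for some $\alpha>0$ and both $i$, then $f_i(x)=O(x)$ for both $i\in\{0,1\}$. *)

theory Defs
  imports "HOL-Analysis.Analysis" "HOL-Library.Landau_Symbols"
begin

end

theory Submission
  imports Defs
begin

lemma powr_gt_self: "0 < (p::real) \<Longrightarrow> p < 1 \<Longrightarrow> b < 1 \<Longrightarrow> p < p powr b"
  by (metis less_eq_real_def powr_less_mono' powr_one)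

lemma powr_le_self: "(x::real) \<ge> 1 \<Longrightarrow> b \<le> 1 \<Longrightarrow> x powr b \<le> x"
  using powr_mono by fastforce

theorem lemma6p7:
  fixes f :: "nat \<Rightarrow> real \<Rightarrow> real" and \<eta> :: "nat \<Rightarrow> real \<Rightarrow> real"
    and p :: "nat \<Rightarrow> real" and \<alpha> :: real
  assumes bdd: "\<And>i a. i \<in> {0,1} \<Longrightarrow> a > 0 \<Longrightarrow> \<exists>B. \<forall>x\<in>{0<..a}. \<bar>f i x\<bar> \<le> B"
    and p_range: "\<And>i. i \<in> {0,1} \<Longrightarrow> 0 < p i \<and> p i < 1"
    and rec: "\<And>i x. i \<in> {0,1} \<Longrightarrow> x > 0 \<Longrightarrow>
                f i x = f i (x * p i) + f (1 - i) (x * (1 - p i)) + \<eta> i x"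
    and alpha_pos: "\<alpha> > 0"
    and eta_bound: "\<And>i. i \<in> {0,1} \<Longrightarrow> \<eta> i \<in> O[at_top](\<lambda>x. x powr (1 - \<alpha>))"
  shows "\<forall>i\<in>{0,1}. f i \<in> O[at_top](\<lambda>x. x)"
proof -
  define \<beta> where "\<beta> = 1 - \<alpha>"
  have b1: "\<beta> < 1" using alpha_pos by (simp add: \<beta>_def)
  have ex_eta: "\<exists>K X. K > 0 \<and> (\<forall>x\<ge>X. \<bar>\<eta> i x\<bar> \<le> K * \<bar>x powr \<beta>\<bar>)" if "i \<in> {0,1}" for i
  proof -
    from eta_bound[OF that] obtain c where c: "c > 0"
      "eventually (\<lambda>x. norm (\<eta> i x) \<le> c * norm (x powr (1 - \<alpha>))) at_top"
      by (elim landau_o.bigE)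
    then obtain X where "\<forall>x\<ge>X. norm (\<eta> i x) \<le> c * norm (x powr (1 - \<alpha>))"
      by (auto simp: eventually_at_top_linorder)
    then show ?thesis using c(1) by (auto simp: \<beta>_def)
  qed
  obtain K0 X0 where k0: "K0 > 0" "\<forall>x\<ge>X0. \<bar>\<eta> 0 x\<bar> \<le> K0 * \<bar>x powr \<beta>\<bar>"
    using ex_eta[of 0] by auto
  obtain K1 X1 where k1: "K1 > 0" "\<forall>x\<ge>X1. \<bar>\<eta> 1 x\<bar> \<le> K1 * \<bar>x powr \<beta>\<bar>"
    using ex_eta[of 1] by auto
  define K where "K = max K0 K1"
  define X where "X = max (max X0 X1) 1"
  have Kpos: "K > 0" using k0 k1 by (simp add: K_def)
  have etaK: "\<bar>\<eta> i x\<bar> \<le> K * x powr \<beta>" if "i \<in> {0,1}" "x \<ge> X" for i x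
  proof -
    have xp: "x > 0" using that by (simp add: X_def)
    have "\<bar>x powr \<beta>\<bar> = x powr \<beta>" by simp
    moreover have "x powr \<beta> \<ge> 0" by simp
    ultimately show ?thesis using that k0 k1 unfolding K_def X_def
      by (auto intro: order.trans mult_right_mono)
  qed
  have p0: "0 < p 0" "p 0 < 1" and p1: "0 < p 1" "p 1 < 1" using p_range[of 0] p_range[of 1] by auto
  define m where "m = min (min (p 0) (1 - p 0)) (min (p 1) (1 - p 1))"
  define q where "q = max (max (p 0) (1 - p 0)) (max (p 1) (1 - p 1))"
  have mpos: "m > 0" using p0 p1 by (simp add: m_def)
  have qlt: "q < 1" "q > 0" using p0 p1 by (auto simp: q_def)
  have pm: "m \<le> p i" "m \<le> 1 - p i" "p i \<le> q" "1 - p i \<le> q" if "i \<in> {0,1}" for i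
    using that by (auto simp: m_def q_def)
  define a0 where "a0 = max X (1/m)"
  have a0X: "a0 \<ge> X" and a01: "a0 \<ge> 1"
    by (auto simp: a0_def X_def)
  have a0m: "a0 * m \<ge> 1"
  proof -
    have "1 / m \<le> a0" by (simp add: a0_def)
    then show ?thesis using mpos by (simp add: field_simps)
  qed
  obtain B0 where B0: "\<forall>x\<in>{0<..a0}. \<bar>f 0 x\<bar> \<le> B0" using bdd[of 0 a0] a01 by auto
  obtain B1 where B1: "\<forall>x\<in>{0<..a0}. \<bar>f 1 x\<bar> \<le> B1" using bdd[of 1 a0] a01 by auto
  define M where "M = max (max B0 B1) 0"
  have Mb: "\<bar>f i x\<bar> \<le> M" if "i \<in> {0,1}" "0 < x" "x \<le> a0" for i x
    using that B0 B1 by (force simp: M_def)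
  have M0: "M \<ge> 0" by (simp add: M_def)
  define \<delta> where "\<delta> = min (p 0 powr \<beta> + (1 - p 0) powr \<beta> - 1) (p 1 powr \<beta> + (1 - p 1) powr \<beta> - 1)"
  have dpos: "\<delta> > 0"
    using powr_gt_self[OF p0 b1] powr_gt_self[of "1 - p 0", OF _ _ b1]
      powr_gt_self[OF p1 b1] powr_gt_self[of "1 - p 1", OF _ _ b1] p0 p1
    by (simp add: \<delta>_def)
  have dle: "1 + \<delta> \<le> p i powr \<beta> + (1 - p i) powr \<beta>" if "i \<in> {0,1}" for i
    using that by (auto simp: \<delta>_def)
  define D where "D = K / \<delta>"
  define C where "C = D + M"
  have Dpos: "D > 0" using Kpos dpos by (simp add: D_def)
  have DK: "D * \<delta> = K" using dpos by (simp add: D_def)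
  have main: "\<forall>x. 1 \<le> x \<longrightarrow> x \<le> a0 / q ^ n \<longrightarrow> (\<forall>i\<in>{0,1}. \<bar>f i x\<bar> \<le> C * x - D * x powr \<beta>)" for n
  proof (induction n)
    case 0
    show ?case
    proof (intro allI impI ballI)
      fix x and i :: nat assume x: "1 \<le> x" "x \<le> a0 / q ^ 0" and i: "i \<in> {0,1}"
      have "\<bar>f i x\<bar> \<le> M" using Mb[OF i, of x] x by simp
      also have "M \<le> M * x" using x M0 by (simp add: mult_le_cancel_left1)
      also have "M * x \<le> C * x - D * x powr \<beta>"
        using powr_le_self[OF x(1), of \<beta>] b1 Dpos by (simp add: C_def algebra_simps)
      finally show "\<bar>f i x\<bar> \<le> C * x - D * x powr \<beta>" .
    qed
  next
    case (Suc n)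
    show ?case
    proof (intro allI impI ballI)
      fix x and i :: nat assume x: "1 \<le> x" "x \<le> a0 / q ^ Suc n" and i: "i \<in> {0,1}"
      show "\<bar>f i x\<bar> \<le> C * x - D * x powr \<beta>"
      proof (cases "x \<le> a0")
        case True
        have "\<bar>f i x\<bar> \<le> M" using Mb[OF i, of x] x True by simp
        also have "M \<le> M * x" using x M0 by (simp add: mult_le_cancel_left1)
        also have "M * x \<le> C * x - D * x powr \<beta>"
          using powr_le_self[OF x(1), of \<beta>] b1 Dpos by (simp add: C_def algebra_simps)
        finally show ?thesis .
      next
        case False
        have j: "1 - i \<in> {0,1}" using i by auto
        have pi: "0 < p i" "p i < 1" using p_range[OF i] by auto
        have xpos: "x > 0" using x by simp
        have qx: "q * x \<le> a0 / q ^ n" using x(2) qlt by (simp add: field_simps)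
        have y1: "1 \<le> x * p i" "x * p i \<le> a0 / q ^ n"
        proof -
          have "1 \<le> a0 * m" by (rule a0m)
          also have "\<dots> \<le> x * p i" using False pm(1)[OF i] mpos a01 by (intro mult_mono) auto
          finally show "1 \<le> x * p i" .
          have "x * p i \<le> x * q" using pm(3)[OF i] xpos by simp
          then show "x * p i \<le> a0 / q ^ n" using qx by (simp add: mult.commute)
        qed
        have y2: "1 \<le> x * (1 - p i)" "x * (1 - p i) \<le> a0 / q ^ n"
        proof -
          have "1 \<le> a0 * m" by (rule a0m)
          also have "\<dots> \<le> x * (1 - p i)" using False pm(2)[OF i] mpos a01 by (intro mult_mono) auto
          finally show "1 \<le> x * (1 - p i)" .
          have "x * (1 - p i) \<le> x * q" using pm(4)[OF i] xpos by simp
          then show "x * (1 - p i) \<le> a0 / q ^ n" using qx by (simp add: mult.commute)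
        qed
        have h1: "\<bar>f i (x * p i)\<bar> \<le> C * (x * p i) - D * (x * p i) powr \<beta>"
          using Suc.IH y1 i by blast
        have h2: "\<bar>f (1 - i) (x * (1 - p i))\<bar> \<le> C * (x * (1 - p i)) - D * (x * (1 - p i)) powr \<beta>"
          using Suc.IH y2 j by blast
        have h3: "\<bar>\<eta> i x\<bar> \<le> K * x powr \<beta>" using etaK[OF i] False a0X by simp
        have e1: "(x * p i) powr \<beta> = x powr \<beta> * p i powr \<beta>"
          using xpos pi by (simp add: powr_mult)
        have e2: "(x * (1 - p i)) powr \<beta> = x powr \<beta> * (1 - p i) powr \<beta>"
          using xpos pi by (simp add: powr_mult)
        have "\<bar>f i x\<bar> \<le> \<bar>f i (x * p i)\<bar> + \<bar>f (1 - i) (x * (1 - p i))\<bar> + \<bar>\<eta> i x\<bar>"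
          using rec[OF i xpos] by linarith
        also have "\<dots> \<le> C * x - D * x powr \<beta> * (p i powr \<beta> + (1 - p i) powr \<beta>) + K * x powr \<beta>"
          using h1 h2 h3 unfolding e1 e2 by (simp add: algebra_simps)
        also have "\<dots> \<le> C * x - D * x powr \<beta> * (1 + \<delta>) + K * x powr \<beta>"
        proof -
          have "D * x powr \<beta> * (1 + \<delta>) \<le> D * x powr \<beta> * (p i powr \<beta> + (1 - p i) powr \<beta>)"
            using dle[OF i] Dpos by (intro mult_left_mono) auto
          then show ?thesis by simp
        qed
        also have "\<dots> = C * x - D * x powr \<beta>"
          using DK by (simp add: algebra_simps)
        finally show ?thesis .
      qed
    qed
  qed
  have final: "\<bar>f i x\<bar> \<le> C * x" if "i \<in> {0,1}" "x \<ge> 1" for i x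
  proof -
    obtain n where n: "x / a0 < (1/q) ^ n" using real_arch_pow[of "1/q" "x / a0"] qlt by auto
    have "x \<le> a0 / q ^ n" using n a01 qlt by (simp add: field_simps power_divide)
    then have "\<bar>f i x\<bar> \<le> C * x - D * x powr \<beta>" using main that by blast
    then show ?thesis using Dpos by (smt (verit) powr_ge_zero mult_nonneg_nonneg)
  qed
  show ?thesis
  proof
    fix i :: nat assume i: "i \<in> {0,1}"
    have Cpos: "C > 0" using Dpos M0 by (simp add: C_def)
    show "f i \<in> O[at_top](\<lambda>x. x)"
    proof (rule landau_o.bigI[OF Cpos])
      show "eventually (\<lambda>x. norm (f i x) \<le> C * norm x) at_top"
        using final[OF i] by (auto simp: eventually_at_top_linorder intro!: exI[of _ 1])
    qed
  qed
qed

end
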